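(* Fix $h_1,\dots,h_K\in\mathbb{C}\setminus\{0\}$, $P_W,P_X,N_0>0$, $\rho_X=P_X/N_0$, $\epsilon>0$, $\eta>0$ and $\delta\in(0,1)$. Suppose the source message length $L$ satisfies $$L\ge\frac{\ln(1/\delta)}{\eta-\ln(1+\eta)},$$ and the coding rate $R=L/\tilde L$ satisfies $$0<R\le\min\left\{1,\ \frac{\epsilon\,\rho_X\min_k|h_k|^2}{(1+\eta)P_W}\right\}.$$ Then under the optimal coding scheme (admissible encoding matrix with $\boldsymbol{\Phi}^{\mathsf H}\boldsymbol{\Phi}=\mathbf{I}_L$ and power scaling $P=P^*=\frac{P_X\min_k|h_k|^2}{RP_W}$), one has $\epsilon\ge(1+\eta)\gamma_{\mathrm{opt}}$ with $\gamma_{\mathrm{opt}}=\frac{RP_W}{\rho_X\min_k|h_k|^2}$, and $$\Pr\big(d(\mathbf{w},\hat{\mathbf{w}})\le\epsilon\big)\ge1-\delta.$$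
   Context: System model (channel-coded over-the-air computation). There are $K$ users; user $k$ holds a random source message $\mathbf{w}_k\in\mathbb{C}^L$, with $\mathbf{w}_1,\dots,\mathbf{w}_K$ independent and $\mathbf{w}_k\sim\mathcal{CN}(\mathbf{0},P_W\mathbf{I}_L)$; $\mathbf{w}=\sum_k\mathbf{w}_k$. An admissible encoding matrix is $\boldsymbol{\Phi}\in\mathbb{C}^{\tilde L\times L}$, $\tilde L\ge L$, with $\mathrm{tr}(\boldsymbol{\Phi}^{\mathsf H}\boldsymbol{\Phi})=L$ and such that every $L\times L$ submatrix formed by $L$ rows of $\boldsymbol{\Phi}$ has rank $L$. Coding rate $R=L/\tilde L$. User $k$ transmits $\mathbf{x}_k=\frac{\sqrt{P}}{h_k}\boldsymbol{\Phi}\mathbf{w}_k$; the base station receives $\mathbf{y}=\sqrt{P}\boldsymbol{\Phi}\mathbf{w}+\mathbf{n}$ with $\mathbf{n}\sim\mathcal{CN}(\mathbf{0},N_0\mathbf{I}_{\tilde L})$ independent of the messages, and estimates $\hat{\mathbf{w}}=\boldsymbol{\Phi}^{\dagger}\mathbf{y}/\sqrt{P}$. The power constraint is $\frac{LPP_W}{\tilde L|h_k|^2}\le P_X$ for all $k$. Distortion $d(\mathbf{w},\hat{\mathbf{w}})=\frac1L\|\hat{\mathbf{w}}-\mathbf{w}\|^2$. *)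

theory Defs
  imports "HOL-Probability.Probability"
    "Jordan_Normal_Form.Schur_Decomposition"
    "Jordan_Normal_Form.DL_Rank"
    "Jordan_Normal_Form.DL_Submatrix"
begin

definition pseudo_inverse :: "complex mat \<Rightarrow> complex mat" where
  "pseudo_inverse A = (THE X. X \<in> carrier_mat (dim_col A) (dim_row A)
      \<and> A * X * A = A \<and> X * A * X = X
      \<and> mat_adjoint (A * X) = A * X \<and> mat_adjoint (X * A) = X * A)"

definition admissible_enc :: "complex mat \<Rightarrow> nat \<Rightarrow> nat \<Rightarrow> bool" where
  "admissible_enc Phi L Lt \<longleftrightarrow> Phi \<in> carrier_mat Lt L \<and> L \<le> Lt
     \<and> (\<Sum>i<L. (mat_adjoint Phi * Phi) $$ (i, i)) = of_nat L
     \<and> (\<forall>S. S \<subseteq> {..<Lt} \<and> card S = L \<longrightarrow>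
            vec_space.rank L (submatrix Phi S {..<L} :: complex mat) = L)"

(* A family X i (i \<in> I) of complex random variables that are jointly independent
   circularly-symmetric complex Gaussians, X i ~ CN(0, v i): the real and imaginary
   parts of all X i are mutually independent, each N(0, v i / 2). *)
definition indep_CN_family ::
  "'a measure \<Rightarrow> ('i \<Rightarrow> 'a \<Rightarrow> complex) \<Rightarrow> 'i set \<Rightarrow> ('i \<Rightarrow> real) \<Rightarrow> bool" where
  "indep_CN_family M X I v \<longleftrightarrow>
     prob_space.indep_vars M (\<lambda>_. borel)
        (\<lambda>(i, b) \<omega>. if b then Re (X i \<omega>) else Im (X i \<omega>)) (I \<times> UNIV)
     \<and> (\<forall>i\<in>I. distributed M lborel (\<lambda>\<omega>. Re (X i \<omega>)) (normal_density 0 (sqrt (v i / 2)))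
              \<and> distributed M lborel (\<lambda>\<omega>. Im (X i \<omega>)) (normal_density 0 (sqrt (v i / 2))))"

definition distortion :: "nat \<Rightarrow> complex vec \<Rightarrow> complex vec \<Rightarrow> real" where
  "distortion L w what = (1 / real L) * (\<Sum>j<L. (cmod (what $ j - w $ j))\<^sup>2)"

end

theory Submission
  imports Defs
begin


lemma nn_integral_normal_density_one:
  assumes "s > 0"
  shows "(\<integral>\<^sup>+x. ennreal (normal_density m s x) \<partial>lborel) = 1"
  using assms by (subst nn_integral_eq_integral) (auto intro: integrable_normal_density)

lemma normal_mgf:
  assumes s: "s > 0"
  shows "(\<integral>\<^sup>+x. ennreal (normal_density 0 s x * exp (c * x)) \<partial>lborel) = ennreal (exp (c\<^sup>2 * s\<^sup>2 / 2))"
proof -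
  have eq: "normal_density 0 s x * exp (c * x) = exp (c\<^sup>2 * s\<^sup>2 / 2) * normal_density (c * s\<^sup>2) s x" for x
  proof -
    have "- x\<^sup>2 / (2 * s\<^sup>2) + c * x = c\<^sup>2 * s\<^sup>2 / 2 + (- (x - c * s\<^sup>2)\<^sup>2 / (2 * s\<^sup>2))"
      using s by (simp add: field_simps power2_eq_square)
    then show ?thesis
      unfolding normal_density_def by (simp add: exp_add[symmetric] mult_exp_exp)
  qed
  show ?thesis
    apply (simp only: eq ennreal_mult' exp_ge_zero nn_integral_cmult)
    apply (subst nn_integral_cmult)
     apply simp
    using nn_integral_normal_density_one[OF s] by simp
qed

lemma normal_quad_mgf:
  assumes a: "a < 1/2"
  shows "(\<integral>\<^sup>+x. ennreal (normal_density 0 1 x * exp (a * x\<^sup>2)) \<partial>lborel) = ennreal (1 / sqrt (1 - 2 * a))"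
proof -
  define s where "s = 1 / sqrt (1 - 2 * a)"
  have s: "s > 0" using a by (simp add: s_def)
  have s2: "s\<^sup>2 = 1 / (1 - 2 * a)" using a by (simp add: s_def power_divide)
  have eq: "normal_density 0 1 x * exp (a * x\<^sup>2) = s * normal_density 0 s x" for x
  proof -
    have "- x\<^sup>2 / 2 + a * x\<^sup>2 = - x\<^sup>2 / (2 * s\<^sup>2)" using a unfolding s2 by (simp add: field_simps)
    moreover have "s * (1 / sqrt (2 * pi * s\<^sup>2)) = 1 / sqrt (2 * pi)"
      using s by (simp add: real_sqrt_mult)
    ultimately have "normal_density 0 1 x * exp (a * x\<^sup>2) = (s * (1 / sqrt (2 * pi * s\<^sup>2))) * exp (- x\<^sup>2 / (2 * s\<^sup>2))"
      unfolding normal_density_def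
      by (simp add: mult_exp_exp[symmetric] exp_add[symmetric] ac_simps)
    then show ?thesis unfolding normal_density_def by simp
  qed
  show ?thesis
    apply (simp only: eq)
    apply (subst ennreal_mult')
     apply (use s in simp)
    apply (subst nn_integral_cmult)
     apply simp
    using nn_integral_normal_density_one[OF s] by (simp add: s_def)
qed



lemma orth_sum:
  fixes u :: "'k \<Rightarrow> 'i \<Rightarrow> real"
  assumes fin: "finite I" "finite J"
    and orth: "\<forall>k\<in>J. \<forall>l\<in>J. (\<Sum>i\<in>I. u k i * u l i) = (if k = l then 1 else 0)"
  shows "(\<Sum>i\<in>I. (\<Sum>k\<in>J. g k * u k i)\<^sup>2) = (\<Sum>k\<in>J. (g k)\<^sup>2)"
proof -
  have "(\<Sum>i\<in>I. (\<Sum>k\<in>J. g k * u k i)\<^sup>2) = (\<Sum>i\<in>I. \<Sum>k\<in>J. \<Sum>l\<in>J. g k * g l * (u k i * u l i))"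
    by (simp add: power2_eq_square sum_product algebra_simps)
  also have "\<dots> = (\<Sum>k\<in>J. \<Sum>i\<in>I. \<Sum>l\<in>J. g k * g l * (u k i * u l i))"
    by (rule sum.swap)
  also have "\<dots> = (\<Sum>k\<in>J. \<Sum>l\<in>J. \<Sum>i\<in>I. g k * g l * (u k i * u l i))"
    by (intro sum.cong refl sum.swap)
  also have "\<dots> = (\<Sum>k\<in>J. \<Sum>l\<in>J. g k * g l * (\<Sum>i\<in>I. u k i * u l i))"
    by (simp add: sum_distrib_left)
  also have "\<dots> = (\<Sum>k\<in>J. \<Sum>l\<in>J. g k * g l * (if k = l then 1 else 0))"
    using orth by (intro sum.cong refl) auto
  also have "\<dots> = (\<Sum>k\<in>J. (g k)\<^sup>2)"
    using fin by (simp add: power2_eq_square if_distrib cong: if_cong)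
  finally show ?thesis .
qed

lemma lin_mgf:
  fixes X :: "'i \<Rightarrow> 'a \<Rightarrow> real"
  assumes P: "prob_space M" and fin: "finite I"
    and ind: "prob_space.indep_vars M (\<lambda>_. borel) X I"
    and dist: "\<forall>i\<in>I. distributed M lborel (X i) (normal_density 0 s)"
    and s: "s > 0"
  shows "(\<integral>\<^sup>+\<omega>. ennreal (exp (\<Sum>i\<in>I. c i * X i \<omega>)) \<partial>M) = ennreal (exp (s\<^sup>2 / 2 * (\<Sum>i\<in>I. (c i)\<^sup>2)))"
proof -
  interpret prob_space M by (rule P)
  have "(\<integral>\<^sup>+\<omega>. ennreal (exp (\<Sum>i\<in>I. c i * X i \<omega>)) \<partial>M) = (\<integral>\<^sup>+\<omega>. (\<Prod>i\<in>I. ennreal (exp (c i * X i \<omega>))) \<partial>M)"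
    using fin by (simp add: exp_sum prod_ennreal)
  also have "\<dots> = (\<Prod>i\<in>I. \<integral>\<^sup>+\<omega>. ennreal (exp (c i * X i \<omega>)) \<partial>M)"
  proof (rule indep_vars_nn_integral[OF fin])
    show "indep_vars (\<lambda>_. borel) (\<lambda>i \<omega>. ennreal (exp (c i * X i \<omega>))) I"
      by (rule indep_vars_compose2[OF ind]) simp
  qed simp
  also have "\<dots> = (\<Prod>i\<in>I. ennreal (exp ((c i)\<^sup>2 * s\<^sup>2 / 2)))"
  proof (rule prod.cong[OF refl])
    fix i assume i: "i \<in> I"
    have "(\<integral>\<^sup>+\<omega>. ennreal (exp (c i * X i \<omega>)) \<partial>M) = (\<integral>\<^sup>+x. ennreal (normal_density 0 s x) * ennreal (exp (c i * x)) \<partial>lborel)"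
      by (rule distributed_nn_integral[symmetric]) (use dist i in auto)
    also have "\<dots> = (\<integral>\<^sup>+x. ennreal (normal_density 0 s x * exp (c i * x)) \<partial>lborel)"
      by (simp add: ennreal_mult)
    also have "\<dots> = ennreal (exp ((c i)\<^sup>2 * s\<^sup>2 / 2))"
      by (rule normal_mgf[OF s])
    finally show "(\<integral>\<^sup>+\<omega>. ennreal (exp (c i * X i \<omega>)) \<partial>M) = ennreal (exp ((c i)\<^sup>2 * s\<^sup>2 / 2))" .
  qed
  also have "\<dots> = ennreal (exp (s\<^sup>2 / 2 * (\<Sum>i\<in>I. (c i)\<^sup>2)))"
    using fin by (simp add: prod_ennreal exp_sum[symmetric] sum_distrib_left sum_divide_distrib algebra_simps)
  finally show ?thesis .
qed



lemma quad_mgf: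
  fixes X :: "'i \<Rightarrow> 'a \<Rightarrow> real" and u :: "'k \<Rightarrow> 'i \<Rightarrow> real"
  assumes P: "prob_space M" and fin: "finite I" "finite J"
    and ind: "prob_space.indep_vars M (\<lambda>_. borel) X I"
    and dist: "\<forall>i\<in>I. distributed M lborel (X i) (normal_density 0 s)"
    and s: "s > 0"
    and orth: "\<forall>k\<in>J. \<forall>l\<in>J. (\<Sum>i\<in>I. u k i * u l i) = (if k = l then 1 else 0)"
    and lam: "0 \<le> lam" "2 * lam * s\<^sup>2 < 1"
  shows "(\<integral>\<^sup>+\<omega>. ennreal (exp (lam * (\<Sum>k\<in>J. (\<Sum>i\<in>I. u k i * X i \<omega>)\<^sup>2))) \<partial>M)
           = ennreal ((1 / sqrt (1 - 2 * lam * s\<^sup>2)) ^ card J)"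
proof -
  interpret prob_space M by (rule P)
  interpret G: product_sigma_finite "\<lambda>_::'k. lborel :: real measure"
    by unfold_locales
  define G where "G = PiM J (\<lambda>_::'k. lborel :: real measure)"
  interpret GF: finite_product_sigma_finite "\<lambda>_::'k. lborel :: real measure" J
    by unfold_locales (rule fin)
  interpret pair_sigma_finite M G
    unfolding G_def
    by (intro pair_sigma_finite.intro sigma_finite_measure_axioms GF.sigma_finite_measure_axioms)
  define t where "t = sqrt (2 * lam)"
  have t2: "t\<^sup>2 = 2 * lam" using lam by (simp add: t_def)
  have Xm[measurable]: "X i \<in> borel_measurable M" if "i \<in> I" for i
    using distributed_measurable[OF bspec[OF dist that]] by simp
  define v where "v \<omega> k = (\<Sum>i\<in>I. u k i * X i \<omega>)" for \<omega> k
  have vm[measurable]: "(\<lambda>\<omega>. v \<omega> k) \<in> borel_measurable M" for k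
    unfolding v_def by (intro borel_measurable_sum borel_measurable_times) auto
  define F where "F \<omega> g = (\<Prod>k\<in>J. ennreal (normal_density 0 1 (g k) * exp (t * v \<omega> k * g k)))" for \<omega> g
  have step1: "ennreal (exp (lam * (\<Sum>k\<in>J. (v \<omega> k)\<^sup>2))) = (\<integral>\<^sup>+g. F \<omega> g \<partial>G)" for \<omega>
  proof -
    have "(\<integral>\<^sup>+g. F \<omega> g \<partial>G) = (\<Prod>k\<in>J. \<integral>\<^sup>+x. ennreal (normal_density 0 1 x * exp ((t * v \<omega> k) * x)) \<partial>lborel)"
      unfolding F_def G_def by (rule G.product_nn_integral_prod[OF fin(2)]) simp
    also have "\<dots> = (\<Prod>k\<in>J. ennreal (exp ((t * v \<omega> k)\<^sup>2 * 1\<^sup>2 / 2)))"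
      by (intro prod.cong refl normal_mgf) simp
    also have "\<dots> = ennreal (exp (lam * (\<Sum>k\<in>J. (v \<omega> k)\<^sup>2)))"
      using fin t2 by (simp add: prod_ennreal exp_sum[symmetric] sum_distrib_left power_mult_distrib)
    finally show ?thesis by simp
  qed
  have Fm: "case_prod F \<in> borel_measurable (M \<Otimes>\<^sub>M G)"
    unfolding F_def G_def
    by measurable
  have step3: "(\<integral>\<^sup>+\<omega>. F \<omega> g \<partial>M) = (\<Prod>k\<in>J. ennreal (normal_density 0 1 (g k) * exp ((lam * s\<^sup>2) * (g k)\<^sup>2)))" for g
  proof -
    define w where "w i = t * (\<Sum>k\<in>J. g k * u k i)" for i
    have sumeq: "(\<Sum>k\<in>J. t * v \<omega> k * g k) = (\<Sum>i\<in>I. w i * X i \<omega>)" for \<omega>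
      unfolding v_def w_def
      by (simp add: sum_distrib_left sum_distrib_right algebra_simps sum.swap[of _ J I])
    have "F \<omega> g = ennreal (\<Prod>k\<in>J. normal_density 0 1 (g k)) * ennreal (exp (\<Sum>i\<in>I. w i * X i \<omega>))" for \<omega>
      unfolding F_def sumeq[symmetric]
      using fin by (simp add: prod_ennreal ennreal_mult[symmetric] prod.distrib exp_sum prod_nonneg)
    then have "(\<integral>\<^sup>+\<omega>. F \<omega> g \<partial>M) = ennreal (\<Prod>k\<in>J. normal_density 0 1 (g k)) * (\<integral>\<^sup>+\<omega>. ennreal (exp (\<Sum>i\<in>I. w i * X i \<omega>)) \<partial>M)"
      by (simp add: nn_integral_cmult)
    also have "\<dots> = ennreal (\<Prod>k\<in>J. normal_density 0 1 (g k)) * ennreal (exp (s\<^sup>2 / 2 * (\<Sum>i\<in>I. (w i)\<^sup>2)))"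
      by (subst lin_mgf[OF P fin(1) ind dist s]) simp
    also have "(\<Sum>i\<in>I. (w i)\<^sup>2) = t\<^sup>2 * (\<Sum>k\<in>J. (g k)\<^sup>2)"
      unfolding w_def power_mult_distrib sum_distrib_left[symmetric]
      using orth_sum[OF fin orth] by simp
    also have "ennreal (\<Prod>k\<in>J. normal_density 0 1 (g k)) * ennreal (exp (s\<^sup>2 / 2 * (t\<^sup>2 * (\<Sum>k\<in>J. (g k)\<^sup>2))))
       = (\<Prod>k\<in>J. ennreal (normal_density 0 1 (g k) * exp ((lam * s\<^sup>2) * (g k)\<^sup>2)))"
      using fin t2 by (simp add: prod_ennreal ennreal_mult[symmetric] prod.distrib exp_sum prod_nonneg sum_distrib_left algebra_simps)
    finally show ?thesis .
  qed
  have "(\<integral>\<^sup>+\<omega>. ennreal (exp (lam * (\<Sum>k\<in>J. (\<Sum>i\<in>I. u k i * X i \<omega>)\<^sup>2))) \<partial>M)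
      = (\<integral>\<^sup>+\<omega>. (\<integral>\<^sup>+g. F \<omega> g \<partial>G) \<partial>M)"
    using step1 unfolding v_def by simp
  also have "\<dots> = (\<integral>\<^sup>+g. (\<integral>\<^sup>+\<omega>. F \<omega> g \<partial>M) \<partial>G)"
    by (rule Fubini'[OF Fm, symmetric])
  also have "\<dots> = (\<integral>\<^sup>+g. (\<Prod>k\<in>J. ennreal (normal_density 0 1 (g k) * exp ((lam * s\<^sup>2) * (g k)\<^sup>2))) \<partial>G)"
    by (simp add: step3)
  also have "\<dots> = (\<Prod>k\<in>J. \<integral>\<^sup>+x. ennreal (normal_density 0 1 x * exp ((lam * s\<^sup>2) * x\<^sup>2)) \<partial>lborel)"
    unfolding G_def by (rule G.product_nn_integral_prod[OF fin(2)]) simp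
  also have "\<dots> = (\<Prod>k\<in>J. ennreal (1 / sqrt (1 - 2 * (lam * s\<^sup>2))))"
    using lam by (intro prod.cong refl normal_quad_mgf) simp
  also have "\<dots> = ennreal ((1 / sqrt (1 - 2 * lam * s\<^sup>2)) ^ card J)"
    using lam by (simp add: mult.assoc) (rule ennreal_power, simp)
  finally show ?thesis .
qed



lemma quad_tail:
  fixes X :: "'i \<Rightarrow> 'a \<Rightarrow> real" and u :: "'k \<Rightarrow> 'i \<Rightarrow> real"
  assumes P: "prob_space M" and fin: "finite I" "finite J"
    and ind: "prob_space.indep_vars M (\<lambda>_. borel) X I"
    and dist: "\<forall>i\<in>I. distributed M lborel (X i) (normal_density 0 s)"
    and s: "s > 0"
    and orth: "\<forall>k\<in>J. \<forall>l\<in>J. (\<Sum>i\<in>I. u k i * u l i) = (if k = l then 1 else 0)"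
    and lam: "0 \<le> lam" "2 * lam * s\<^sup>2 < 1"
  shows "emeasure M {\<omega> \<in> space M. a \<le> (\<Sum>k\<in>J. (\<Sum>i\<in>I. u k i * X i \<omega>)\<^sup>2)}
           \<le> ennreal (exp (- (lam * a)) * (1 / sqrt (1 - 2 * lam * s\<^sup>2)) ^ card J)"
proof -
  interpret prob_space M by (rule P)
  define S where "S \<omega> = (\<Sum>k\<in>J. (\<Sum>i\<in>I. u k i * X i \<omega>)\<^sup>2)" for \<omega>
  have Xm[measurable]: "X i \<in> borel_measurable M" if "i \<in> I" for i
    using distributed_measurable[OF bspec[OF dist that]] by simp
  have Sm[measurable]: "S \<in> borel_measurable M"
    unfolding S_def by (intro borel_measurable_sum borel_measurable_power borel_measurable_times) auto
  define c where "c = ennreal (exp (- (lam * a)))"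
  have sub: "{\<omega> \<in> space M. a \<le> S \<omega>} \<subseteq> {\<omega> \<in> space M. 1 \<le> c * ennreal (exp (lam * S \<omega>))}"
  proof safe
    fix \<omega> assume "\<omega> \<in> space M" "a \<le> S \<omega>"
    then have "lam * a \<le> lam * S \<omega>" using lam by (simp add: mult_left_mono)
    then have "1 \<le> exp (- (lam * a)) * exp (lam * S \<omega>)"
      by (simp add: mult_exp_exp)
    then show "1 \<le> c * ennreal (exp (lam * S \<omega>))"
      unfolding c_def by (simp add: ennreal_mult[symmetric] flip: ennreal_1)
  qed
  have "emeasure M {\<omega> \<in> space M. a \<le> S \<omega>} \<le> emeasure M {\<omega> \<in> space M. 1 \<le> c * ennreal (exp (lam * S \<omega>))}"
    by (rule emeasure_mono[OF sub]) measurable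
  also have "\<dots> \<le> c * (\<integral>\<^sup>+\<omega>. ennreal (exp (lam * S \<omega>)) * indicator (space M) \<omega> \<partial>M)"
    by (rule nn_integral_Markov_inequality) auto
  also have "(\<integral>\<^sup>+\<omega>. ennreal (exp (lam * S \<omega>)) * indicator (space M) \<omega> \<partial>M) = (\<integral>\<^sup>+\<omega>. ennreal (exp (lam * S \<omega>)) \<partial>M)"
    by (intro nn_integral_cong) auto
  also have "\<dots> = ennreal ((1 / sqrt (1 - 2 * lam * s\<^sup>2)) ^ card J)"
    unfolding S_def by (rule quad_mgf[OF P fin ind dist s orth lam])
  also have "c * \<dots> = ennreal (exp (- (lam * a)) * (1 / sqrt (1 - 2 * lam * s\<^sup>2)) ^ card J)"
    unfolding c_def by (rule ennreal_mult'[symmetric]) simp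
  finally show ?thesis unfolding S_def .
qed



lemma conjugate_complex_cnj: "conjugate (z::complex) = cnj z"
  by (simp add: conjugate_complex_def)

lemma adj_carrier: "A \<in> carrier_mat n m \<Longrightarrow> mat_adjoint A \<in> carrier_mat m n"
  unfolding mat_adjoint_def by auto

lemma adj_dims[simp]: "dim_row (mat_adjoint A) = dim_col A" "dim_col (mat_adjoint A) = dim_row A"
  unfolding mat_adjoint_def by auto

lemma adj_index: "i < dim_col A \<Longrightarrow> j < dim_row A \<Longrightarrow> mat_adjoint (A :: complex mat) $$ (i, j) = cnj (A $$ (j, i))"
  unfolding mat_adjoint_def by (simp add: mat_of_rows_index conjugate_complex_cnj)

lemma adj_mult:
  assumes A: "(A :: complex mat) \<in> carrier_mat n m" and B: "B \<in> carrier_mat m p"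
  shows "mat_adjoint (A * B) = mat_adjoint B * mat_adjoint A"
proof (rule eq_matI)
  fix i j assume i: "i < dim_row (mat_adjoint B * mat_adjoint A)" and j: "j < dim_col (mat_adjoint B * mat_adjoint A)"
  then have i': "i < p" and j': "j < n" using A B by auto
  show "mat_adjoint (A * B) $$ (i, j) = (mat_adjoint B * mat_adjoint A) $$ (i, j)"
    using A B i' j'
    apply (simp add: adj_index scalar_prod_def sum_conjugate conjugate_complex_cnj)
    apply (rule sum.cong, rule refl)
    apply (simp add: adj_index)
    done
qed (use A B in auto)

lemma adj_adj: "mat_adjoint (mat_adjoint (A :: complex mat)) = A"
  by (rule eq_matI) (auto simp: adj_index)

lemma adj_one: "mat_adjoint (1\<^sub>m n :: complex mat) = 1\<^sub>m n"
  by (rule eq_matI) (auto simp: adj_index)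

lemma pinv_orth:
  assumes A: "(A :: complex mat) \<in> carrier_mat n m" and orth: "mat_adjoint A * A = 1\<^sub>m m"
  shows "pseudo_inverse A = mat_adjoint A"
  unfolding pseudo_inverse_def
proof (rule the_equality)
  have AH: "mat_adjoint A \<in> carrier_mat m n" using A by (rule adj_carrier)
  have dims: "dim_col A = m" "dim_row A = n" using A by auto
  show "mat_adjoint A \<in> carrier_mat (dim_col A) (dim_row A) \<and>
    A * mat_adjoint A * A = A \<and> mat_adjoint A * A * mat_adjoint A = mat_adjoint A \<and>
    mat_adjoint (A * mat_adjoint A) = A * mat_adjoint A \<and> mat_adjoint (mat_adjoint A * A) = mat_adjoint A * A"
  proof (intro conjI)
    show "mat_adjoint A \<in> carrier_mat (dim_col A) (dim_row A)" using AH dims by simp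
    have "A * mat_adjoint A * A = A * (mat_adjoint A * A)" using A AH by (simp add: assoc_mult_mat[of _ n m _ n _ m])
    then show "A * mat_adjoint A * A = A" using A orth by simp
    show "mat_adjoint A * A * mat_adjoint A = mat_adjoint A" using orth AH left_mult_one_mat by metis
    show "mat_adjoint (A * mat_adjoint A) = A * mat_adjoint A"
      using adj_mult[OF A AH] adj_adj by simp
    show "mat_adjoint (mat_adjoint A * A) = mat_adjoint A * A"
      using orth adj_one by simp
  qed
  fix X assume X: "X \<in> carrier_mat (dim_col A) (dim_row A) \<and>
    A * X * A = A \<and> X * A * X = X \<and> mat_adjoint (A * X) = A * X \<and> mat_adjoint (X * A) = X * A"
  have AH: "mat_adjoint A \<in> carrier_mat m n" using A by (rule adj_carrier)
  have Xc: "X \<in> carrier_mat m n" using X A by auto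
  have XA: "X * A = 1\<^sub>m m"
  proof -
    have "mat_adjoint A * (A * X * A) = mat_adjoint A * A" using X by simp
    moreover have "mat_adjoint A * (A * X * A) = (mat_adjoint A * A) * (X * A)"
    proof -
      have XAc: "X * A \<in> carrier_mat m m" using Xc A by simp
      have "A * X * A = A * (X * A)" using A Xc by (simp add: assoc_mult_mat[of _ n m _ n _ m])
      then show ?thesis using A AH XAc by (simp add: assoc_mult_mat[of _ m n _ m _ m])
    qed
    ultimately show ?thesis using orth Xc A by simp
  qed
  have "X = (mat_adjoint A * A) * X" using orth Xc by simp
  also have "\<dots> = mat_adjoint A * (A * X)" using A AH Xc by (simp add: assoc_mult_mat[of _ m n _ m _ n])
  also have "A * X = mat_adjoint X * mat_adjoint A" using X adj_mult[OF A Xc] by simp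
  also have "mat_adjoint A * (mat_adjoint X * mat_adjoint A) = (mat_adjoint A * mat_adjoint X) * mat_adjoint A"
    using AH adj_carrier[OF Xc] by (simp add: assoc_mult_mat[of _ m n _ m _ n])
  also have "mat_adjoint A * mat_adjoint X = mat_adjoint (X * A)" using adj_mult[OF Xc A] by simp
  also have "\<dots> = 1\<^sub>m m" using XA adj_one by simp
  finally show "X = mat_adjoint A" using AH left_mult_one_mat by metis
qed

lemma distortion_eq:
  assumes Phi: "Phi \<in> carrier_mat Lt L" and orth: "mat_adjoint Phi * Phi = 1\<^sub>m L" and P: "P > 0"
  shows "distortion L (vec L f)
     (complex_of_real (1 / sqrt P) \<cdot>\<^sub>v (pseudo_inverse Phi *\<^sub>v
        (complex_of_real (sqrt P) \<cdot>\<^sub>v (Phi *\<^sub>v vec L f) + vec Lt g)))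
    = (1 / (real L * P)) * (\<Sum>j<L. (cmod (\<Sum>i<Lt. cnj (Phi $$ (i, j)) * g i))\<^sup>2)"
proof -
  let ?A = "mat_adjoint Phi"
  let ?w = "vec L f" and ?n = "vec Lt g"
  have AH: "?A \<in> carrier_mat L Lt" using Phi by (rule adj_carrier)
  have w: "?w \<in> carrier_vec L" and n: "?n \<in> carrier_vec Lt" by auto
  have Pw: "Phi *\<^sub>v ?w \<in> carrier_vec Lt" using Phi w by simp
  have "?A *\<^sub>v (complex_of_real (sqrt P) \<cdot>\<^sub>v (Phi *\<^sub>v ?w) + ?n)
      = complex_of_real (sqrt P) \<cdot>\<^sub>v (?A *\<^sub>v (Phi *\<^sub>v ?w)) + ?A *\<^sub>v ?n"
    using AH Pw n by (simp add: mult_add_distrib_mat_vec mult_mat_vec)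
  also have "?A *\<^sub>v (Phi *\<^sub>v ?w) = ?w"
    using AH Phi w orth by (simp add: assoc_mult_mat_vec[symmetric, of _ L Lt _ L])
  finally have eq: "?A *\<^sub>v (complex_of_real (sqrt P) \<cdot>\<^sub>v (Phi *\<^sub>v ?w) + ?n) = complex_of_real (sqrt P) \<cdot>\<^sub>v ?w + ?A *\<^sub>v ?n" .
  have ent: "(complex_of_real (1 / sqrt P) \<cdot>\<^sub>v (complex_of_real (sqrt P) \<cdot>\<^sub>v ?w + ?A *\<^sub>v ?n)) $ j - ?w $ j
      = complex_of_real (1 / sqrt P) * (\<Sum>i<Lt. cnj (Phi $$ (i, j)) * g i)" if j: "j < L" for j
  proof -
    have "(?A *\<^sub>v ?n) $ j = (\<Sum>i<Lt. cnj (Phi $$ (i, j)) * g i)"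
      using j AH Phi by (simp add: scalar_prod_def adj_index lessThan_atLeast0)
    moreover have "complex_of_real (1 / sqrt P) * complex_of_real (sqrt P) = 1"
      using P by (simp flip: of_real_mult)
    moreover have "(complex_of_real (1 / sqrt P) \<cdot>\<^sub>v (complex_of_real (sqrt P) \<cdot>\<^sub>v ?w + ?A *\<^sub>v ?n)) $ j
       = complex_of_real (1 / sqrt P) * (complex_of_real (sqrt P) * f j + (?A *\<^sub>v ?n) $ j)"
      using j carrier_matD[OF AH] by (simp add: index_add_vec index_smult_vec)
    ultimately show ?thesis using j
      by (simp add: algebra_simps)
  qed
  have cm: "(cmod (complex_of_real (1 / sqrt P) * z))\<^sup>2 = (cmod z)\<^sup>2 / P" for z
    using P by (simp add: norm_divide power_divide)
  have "(\<Sum>j<L. (cmod ((complex_of_real (1 / sqrt P) \<cdot>\<^sub>v (complex_of_real (sqrt P) \<cdot>\<^sub>v ?w + ?A *\<^sub>v ?n)) $ j - ?w $ j))\<^sup>2)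
     = (\<Sum>j<L. (cmod (\<Sum>i<Lt. cnj (Phi $$ (i, j)) * g i))\<^sup>2 / P)"
    by (rule sum.cong[OF refl]) (simp only: ent cm lessThan_iff)
  then show ?thesis
    unfolding distortion_def pinv_orth[OF Phi orth] eq
    by (simp add: sum_divide_distrib mult.commute)
qed



lemma sum_I_split:
  fixes h :: "((nat \<times> nat) + nat) \<times> bool \<Rightarrow> real"
  shows "(\<Sum>x\<in>Inr ` {..<Lt} \<times> UNIV. h x) = (\<Sum>i<Lt. h (Inr i, True) + h (Inr i, False))"
proof -
  have "(\<Sum>x\<in>Inr ` {..<Lt} \<times> UNIV. h x) = (\<Sum>s\<in>Inr ` {..<Lt}. \<Sum>b\<in>UNIV. h (s, b))"
    by (rule sum.cartesian_product')
  also have "\<dots> = (\<Sum>i<Lt. \<Sum>b\<in>UNIV. h (Inr i, b))"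
    by (subst sum.reindex) (auto simp: inj_on_def)
  also have "\<dots> = (\<Sum>i<Lt. h (Inr i, True) + h (Inr i, False))"
    by (simp add: UNIV_bool add.commute)
  finally show ?thesis .
qed

lemma sum_J_split:
  fixes h :: "nat \<times> bool \<Rightarrow> real"
  shows "(\<Sum>k\<in>{..<L} \<times> UNIV. h k) = (\<Sum>j<L. h (j, True) + h (j, False))"
proof -
  have "(\<Sum>k\<in>{..<L} \<times> UNIV. h k) = (\<Sum>j<L. \<Sum>b\<in>UNIV. h (j, b))"
    by (rule sum.cartesian_product')
  also have "\<dots> = (\<Sum>j<L. h (j, True) + h (j, False))"
    by (simp add: UNIV_bool add.commute)
  finally show ?thesis .
qed

lemma noise_tail:
  fixes F :: "(nat \<times> nat) + nat \<Rightarrow> 'a \<Rightarrow> complex" and Phi :: "nat \<Rightarrow> nat \<Rightarrow> complex"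
  assumes P: "prob_space M"
    and ind: "prob_space.indep_vars M (\<lambda>_. borel) (\<lambda>(s, b) \<omega>. if b then Re (F s \<omega>) else Im (F s \<omega>)) (Inr ` {..<Lt} \<times> UNIV)"
    and dist: "\<forall>i<Lt. distributed M lborel (\<lambda>\<omega>. Re (F (Inr i) \<omega>)) (normal_density 0 (sqrt (N0 / 2)))
                   \<and> distributed M lborel (\<lambda>\<omega>. Im (F (Inr i) \<omega>)) (normal_density 0 (sqrt (N0 / 2)))"
    and N0: "N0 > 0" and eta: "\<eta> > 0"
    and orth: "\<forall>j<L. \<forall>l<L. (\<Sum>i<Lt. cnj (Phi i j) * Phi i l) = (if j = l then 1 else 0)"
  shows "emeasure M {\<omega> \<in> space M. (1 + \<eta>) * real L * N0 \<le> (\<Sum>j<L. (cmod (\<Sum>i<Lt. cnj (Phi i j) * F (Inr i) \<omega>))\<^sup>2)}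
           \<le> ennreal (exp (- (real L * (\<eta> - ln (1 + \<eta>)))))"
proof -
  define X where "X = (\<lambda>(s, b) \<omega>. if b then Re (F s \<omega>) else Im (F s \<omega>))"
  define I :: "((nat \<times> nat + nat) \<times> bool) set" where "I = Inr ` {..<Lt} \<times> (UNIV :: bool set)"
  define J where "J = {..<L} \<times> (UNIV :: bool set)"
  define u :: "nat \<times> bool \<Rightarrow> ((nat \<times> nat) + nat) \<times> bool \<Rightarrow> real"
    where "u = (\<lambda>(j, c) (s, b). (case s of Inl _ \<Rightarrow> 0 | Inr i \<Rightarrow>
      (if c then (if b then Re (Phi i j) else Im (Phi i j)) else (if b then - Im (Phi i j) else Re (Phi i j)))))"
  define s where "s = sqrt (N0 / 2)"
  have s: "s > 0" and s2: "s\<^sup>2 = N0 / 2" using N0 by (auto simp: s_def)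
  define lam where "lam = \<eta> / ((1 + \<eta>) * N0)"
  have lam0: "0 \<le> lam" using eta N0 by (simp add: lam_def)
  have lam2: "2 * lam * s\<^sup>2 = \<eta> / (1 + \<eta>)" using N0 eta by (simp add: lam_def s2 divide_simps)
  have lam1: "2 * lam * s\<^sup>2 < 1" unfolding lam2 using eta by simp
  have finI: "finite I" and finJ: "finite J" by (auto simp: I_def J_def)
  have ind': "prob_space.indep_vars M (\<lambda>_. borel) X I" using ind unfolding X_def I_def .
  have dist': "\<forall>x\<in>I. distributed M lborel (X x) (normal_density 0 s)"
  proof
    fix x assume "x \<in> I"
    then obtain i b where x: "x = (Inr i, b)" "i < Lt" unfolding I_def by auto
    show "distributed M lborel (X x) (normal_density 0 s)"
      using dist x unfolding s_def X_def by (cases b) auto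
  qed
  have G: "(\<Sum>i<Lt. Re (Phi i j) * Re (Phi i l) + Im (Phi i j) * Im (Phi i l)) = (if j = l then 1 else 0)"
          "(\<Sum>i<Lt. Re (Phi i j) * Im (Phi i l) - Im (Phi i j) * Re (Phi i l)) = 0"
    if "j < L" "l < L" for j l
  proof -
    have e: "(\<Sum>i<Lt. cnj (Phi i j) * Phi i l) = (if j = l then 1 else 0)" using orth that by auto
    have "Re (\<Sum>i<Lt. cnj (Phi i j) * Phi i l) = (if j = l then 1 else 0)" unfolding e by simp
    then show "(\<Sum>i<Lt. Re (Phi i j) * Re (Phi i l) + Im (Phi i j) * Im (Phi i l)) = (if j = l then 1 else 0)"
      by (simp add: Re_sum)
    have "Im (\<Sum>i<Lt. cnj (Phi i j) * Phi i l) = 0" unfolding e by simp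
    then show "(\<Sum>i<Lt. Re (Phi i j) * Im (Phi i l) - Im (Phi i j) * Re (Phi i l)) = 0"
      by (simp add: Im_sum)
  qed
  have orth': "\<forall>k\<in>J. \<forall>l\<in>J. (\<Sum>x\<in>I. u k x * u l x) = (if k = l then 1 else 0)"
  proof (intro ballI)
    fix k l assume "k \<in> J" "l \<in> J"
    then obtain j c j' d where k: "k = (j, c)" "j < L" and l: "l = (j', d)" "j' < L" unfolding J_def by auto
    have "(\<Sum>x\<in>I. u k x * u l x) = (\<Sum>i<Lt. u k (Inr i, True) * u l (Inr i, True) + u k (Inr i, False) * u l (Inr i, False))"
      unfolding I_def by (rule sum_I_split)
    also have "\<dots> = (if k = l then 1 else 0)"
    proof (cases c; cases d)
      assume "c" "d" then show ?thesis using G(1)[OF k(2) l(2)] k l by (simp add: u_def)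
    next
      assume "\<not> c" "\<not> d" then show ?thesis using G(1)[OF k(2) l(2)] k l by (simp add: u_def algebra_simps)
    next
      assume "c" "\<not> d"
      then show ?thesis using G(2)[OF k(2) l(2)] k l
        by (simp add: u_def algebra_simps sum_subtractf sum_negf)
    next
      assume "\<not> c" "d"
      then show ?thesis using G(2)[OF l(2) k(2)] k l
        by (simp add: u_def algebra_simps sum_subtractf sum_negf)
    qed
    finally show "(\<Sum>x\<in>I. u k x * u l x) = (if k = l then 1 else 0)" .
  qed
  have Seq: "(\<Sum>k\<in>J. (\<Sum>x\<in>I. u k x * X x \<omega>)\<^sup>2) = (\<Sum>j<L. (cmod (\<Sum>i<Lt. cnj (Phi i j) * F (Inr i) \<omega>))\<^sup>2)" for \<omega>
  proof -
    have re: "(\<Sum>x\<in>I. u (j, True) x * X x \<omega>) = Re (\<Sum>i<Lt. cnj (Phi i j) * F (Inr i) \<omega>)" for j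
      unfolding I_def sum_I_split by (simp add: u_def X_def Re_sum)
    have im: "(\<Sum>x\<in>I. u (j, False) x * X x \<omega>) = Im (\<Sum>i<Lt. cnj (Phi i j) * F (Inr i) \<omega>)" for j
      unfolding I_def sum_I_split by (simp add: u_def X_def Im_sum algebra_simps)
    show ?thesis
      unfolding J_def sum_J_split re im by (simp add: cmod_power2)
  qed
  have "emeasure M {\<omega> \<in> space M. (1 + \<eta>) * real L * N0 \<le> (\<Sum>k\<in>J. (\<Sum>x\<in>I. u k x * X x \<omega>)\<^sup>2)}
      \<le> ennreal (exp (- (lam * ((1 + \<eta>) * real L * N0))) * (1 / sqrt (1 - 2 * lam * s\<^sup>2)) ^ card J)"
    by (rule quad_tail[OF P finI finJ ind' dist' s orth' lam0 lam1])
  also have "exp (- (lam * ((1 + \<eta>) * real L * N0))) * (1 / sqrt (1 - 2 * lam * s\<^sup>2)) ^ card J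
       = exp (- (real L * (\<eta> - ln (1 + \<eta>))))"
  proof -
    have cJ: "card J = 2 * L" unfolding J_def by (simp add: card_cartesian_product)
    have la: "lam * ((1 + \<eta>) * real L * N0) = \<eta> * real L"
      using N0 eta by (simp add: lam_def divide_simps)
    have "1 - 2 * lam * s\<^sup>2 = 1 / (1 + \<eta>)" unfolding lam2 using eta by (simp add: field_simps)
    then have "1 / sqrt (1 - 2 * lam * s\<^sup>2) = sqrt (1 + \<eta>)" by (simp add: real_sqrt_divide)
    then have "(1 / sqrt (1 - 2 * lam * s\<^sup>2)) ^ card J = (1 + \<eta>) ^ L"
      unfolding cJ using eta by (simp add: power_mult)
    also have "\<dots> = exp (real L * ln (1 + \<eta>))"
      using eta by (simp add: exp_of_nat_mult[symmetric] ln_realpow[symmetric])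
    finally show ?thesis unfolding la by (simp add: mult_exp_exp algebra_simps)
  qed
  finally show ?thesis unfolding Seq .
qed



theorem theorem4:
  fixes M :: "'a measure"
    and K L Lt :: nat
    and h :: "nat \<Rightarrow> complex"
    and P_W P_X N0 \<epsilon> \<eta> \<delta> P :: real
    and Phi :: "complex mat"
    and W :: "nat \<Rightarrow> nat \<Rightarrow> 'a \<Rightarrow> complex"  \<comment> \<open>W k j = j-th entry of message w_k\<close>
    and N :: "nat \<Rightarrow> 'a \<Rightarrow> complex"           \<comment> \<open>N i = i-th entry of the noise n\<close>
  assumes M: "prob_space M"
    and K: "K \<ge> 1"
    and h: "\<forall>k<K. h k \<noteq> 0"
    and pos: "P_W > 0" "P_X > 0" "N0 > 0" "\<epsilon> > 0" "\<eta> > 0"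
    and \<delta>: "0 < \<delta>" "\<delta> < 1"
    and gauss: "indep_CN_family M
                  (\<lambda>s. case s of Inl (k, j) \<Rightarrow> W k j | Inr i \<Rightarrow> N i)
                  (({..<K} \<times> {..<L}) <+> {..<Lt})
                  (\<lambda>s. case s of Inl _ \<Rightarrow> P_W | Inr _ \<Rightarrow> N0)"
    and Lbound: "real L \<ge> ln (1 / \<delta>) / (\<eta> - ln (1 + \<eta>))"
    and Rpos: "0 < real L / real Lt"
    and Rbound: "real L / real Lt \<le> min 1
        (\<epsilon> * (P_X / N0) * Min ((\<lambda>k. (cmod (h k))\<^sup>2) ` {..<K}) / ((1 + \<eta>) * P_W))"
    and adm: "admissible_enc Phi L Lt"
    and orth: "mat_adjoint Phi * Phi = 1\<^sub>m L"
    and Popt: "P = P_X * Min ((\<lambda>k. (cmod (h k))\<^sup>2) ` {..<K}) / ((real L / real Lt) * P_W)"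
  shows "\<epsilon> \<ge> (1 + \<eta>) * ((real L / real Lt) * P_W
                 / ((P_X / N0) * Min ((\<lambda>k. (cmod (h k))\<^sup>2) ` {..<K})))
     \<and> measure M {\<omega> \<in> space M.
          (let w = vec L (\<lambda>j. \<Sum>k<K. W k j \<omega>);
               n = vec Lt (\<lambda>i. N i \<omega>);
               y = complex_of_real (sqrt P) \<cdot>\<^sub>v (Phi *\<^sub>v w) + n;
               what = complex_of_real (1 / sqrt P) \<cdot>\<^sub>v (pseudo_inverse Phi *\<^sub>v y)
           in distortion L w what \<le> \<epsilon>)} \<ge> 1 - \<delta>"
proof -
  interpret prob_space M by (rule M)
  define m where "m = Min ((\<lambda>k. (cmod (h k))\<^sup>2) ` {..<K})"
  define R where "R = real L / real Lt"
  have m: "m > 0"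
  proof -
    have "0 \<in> {..<K}" using K by simp
    then have ne: "{..<K} \<noteq> {}" by blast
    have "\<forall>k\<in>{..<K}. 0 < (cmod (h k))\<^sup>2" using h by simp
    then show ?thesis unfolding m_def using ne by (subst Min_gr_iff) auto
  qed
  have R: "R > 0" using Rpos by (simp add: R_def)
  have Lpos: "L > 0"
  proof (rule ccontr)
    assume "\<not> L > 0"
    then have "L = 0" by simp
    then show False using Rpos by simp
  qed
  have Rb: "R \<le> \<epsilon> * (P_X / N0) * m / ((1 + \<eta>) * P_W)" using Rbound by (simp add: R_def m_def)
  have Rb': "R * ((1 + \<eta>) * P_W) \<le> \<epsilon> * (P_X / N0) * m"
  proof -
    have Y: "(1 + \<eta>) * P_W > 0" using pos by simp
    show ?thesis using Rb by (simp only: pos_le_divide_eq[OF Y])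
  qed
  have part1: "\<epsilon> \<ge> (1 + \<eta>) * (R * P_W / ((P_X / N0) * m))"
  proof -
    have D: "(P_X / N0) * m > 0" using pos m by simp
    have "(1 + \<eta>) * (R * P_W) \<le> \<epsilon> * ((P_X / N0) * m)" using Rb' by (simp only: ac_simps)
    then have "((1 + \<eta>) * (R * P_W)) / ((P_X / N0) * m) \<le> \<epsilon>" using D by (simp only: pos_divide_le_eq)
    then show ?thesis by (simp only: times_divide_eq_right)
  qed
  have PP: "P = P_X * m / (R * P_W)" using Popt by (simp add: R_def m_def)
  have Ppos: "P > 0" unfolding PP using pos m R by simp
  have epsP: "(1 + \<eta>) * N0 \<le> \<epsilon> * P"
  proof -
    have "(1 + \<eta>) * N0 * (R * P_W) \<le> \<epsilon> * (P_X * m)"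
      using Rb' pos by (simp add: field_simps)
    then show ?thesis unfolding PP using pos R m by (simp add: field_simps)
  qed
  have Phic: "Phi \<in> carrier_mat Lt L" using adm by (simp add: admissible_enc_def)
  define T where "T \<omega> = (\<Sum>j<L. (cmod (\<Sum>i<Lt. cnj (Phi $$ (i, j)) * N i \<omega>))\<^sup>2)" for \<omega>
  define F where "F = (\<lambda>s. case s of Inl (k, j) \<Rightarrow> W k j | Inr i \<Rightarrow> N i)"
  have g1: "indep_vars (\<lambda>_. borel) (\<lambda>(s, b) \<omega>. if b then Re (F s \<omega>) else Im (F s \<omega>))
              ((({..<K} \<times> {..<L}) <+> {..<Lt}) \<times> UNIV)"
    using gauss unfolding indep_CN_family_def F_def by simp
  have g2: "\<forall>i<Lt. distributed M lborel (\<lambda>\<omega>. Re (F (Inr i) \<omega>)) (normal_density 0 (sqrt (N0 / 2)))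
                   \<and> distributed M lborel (\<lambda>\<omega>. Im (F (Inr i) \<omega>)) (normal_density 0 (sqrt (N0 / 2)))"
  proof (intro allI impI)
    fix i assume i: "i < Lt"
    have "Inr i \<in> ({..<K} \<times> {..<L}) <+> {..<Lt}" using i by (intro InrI) simp
    show "distributed M lborel (\<lambda>\<omega>. Re (F (Inr i) \<omega>)) (normal_density 0 (sqrt (N0 / 2)))
                   \<and> distributed M lborel (\<lambda>\<omega>. Im (F (Inr i) \<omega>)) (normal_density 0 (sqrt (N0 / 2)))"
    proof -
      have "\<forall>s\<in>({..<K} \<times> {..<L}) <+> {..<Lt}. distributed M lborel (\<lambda>\<omega>. Re (F s \<omega>)) (normal_density 0 (sqrt ((case s of Inl _ \<Rightarrow> P_W | Inr _ \<Rightarrow> N0) / 2)))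
          \<and> distributed M lborel (\<lambda>\<omega>. Im (F s \<omega>)) (normal_density 0 (sqrt ((case s of Inl _ \<Rightarrow> P_W | Inr _ \<Rightarrow> N0) / 2)))"
        using gauss unfolding indep_CN_family_def F_def by blast
      from bspec[OF this \<open>Inr i \<in> _\<close>] show ?thesis by simp
    qed
  qed
  have ind: "indep_vars (\<lambda>_. borel) (\<lambda>(s, b) \<omega>. if b then Re (F s \<omega>) else Im (F s \<omega>)) (Inr ` {..<Lt} \<times> UNIV)"
    by (rule indep_vars_subset[OF g1]) auto
  have orth': "\<forall>j<L. \<forall>l<L. (\<Sum>i<Lt. cnj (Phi $$ (i, j)) * Phi $$ (i, l)) = (if j = l then 1 else 0)"
  proof (intro allI impI)
    fix j l assume j: "j < L" and l: "l < L"
    have "(mat_adjoint Phi * Phi) $$ (j, l) = (\<Sum>i<Lt. cnj (Phi $$ (i, j)) * Phi $$ (i, l))"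
      using j l Phic by (simp add: scalar_prod_def adj_index lessThan_atLeast0)
    then show "(\<Sum>i<Lt. cnj (Phi $$ (i, j)) * Phi $$ (i, l)) = (if j = l then 1 else 0)"
      using orth j l by simp
  qed
  have tail: "emeasure M {\<omega> \<in> space M. (1 + \<eta>) * real L * N0 \<le> T \<omega>} \<le> ennreal (exp (- (real L * (\<eta> - ln (1 + \<eta>)))))"
    using noise_tail[OF M ind g2 pos(3) pos(5) orth'] unfolding T_def F_def by simp
  have den: "\<eta> - ln (1 + \<eta>) > 0" using pos(5) ln_add_one_self_less_self by simp
  have "ln (1 / \<delta>) \<le> real L * (\<eta> - ln (1 + \<eta>))"
    using Lbound den by (simp add: divide_le_eq mult.commute)
  then have "exp (- (real L * (\<eta> - ln (1 + \<eta>)))) \<le> exp (- ln (1 / \<delta>))" by simp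
  also have "\<dots> = \<delta>" using \<delta> by (simp add: ln_div)
  finally have ed: "exp (- (real L * (\<eta> - ln (1 + \<eta>)))) \<le> \<delta>" .
  have Nm: "N i \<in> borel_measurable M" if "i < Lt" for i
  proof -
    have "(\<lambda>\<omega>. Re (N i \<omega>)) \<in> borel_measurable M" "(\<lambda>\<omega>. Im (N i \<omega>)) \<in> borel_measurable M"
      using g2 that by (auto simp: F_def dest!: distributed_measurable)
    then show ?thesis by (simp add: borel_measurable_complex_iff)
  qed
  have Zm[measurable]: "(\<lambda>\<omega>. \<Sum>i<Lt. cnj (Phi $$ (i, j)) * N i \<omega>) \<in> borel_measurable M" for j
    by (intro borel_measurable_sum borel_measurable_times borel_measurable_const Nm) auto
  have Tm[measurable]: "T \<in> borel_measurable M"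
    unfolding T_def by measurable
  define B where "B = {\<omega> \<in> space M. (1 + \<eta>) * real L * N0 \<le> T \<omega>}"
  have Bm: "B \<in> sets M" unfolding B_def using Tm by measurable
  have mB: "measure M B \<le> \<delta>"
  proof -
    have e1: "emeasure M B \<le> ennreal \<delta>"
      unfolding B_def using order.trans[OF tail ennreal_leI[OF ed]] .
    then show ?thesis using \<delta> by (simp add: emeasure_eq_measure)
  qed
  define E where "E = {\<omega> \<in> space M.
          (let w = vec L (\<lambda>j. \<Sum>k<K. W k j \<omega>);
               n = vec Lt (\<lambda>i. N i \<omega>);
               y = complex_of_real (sqrt P) \<cdot>\<^sub>v (Phi *\<^sub>v w) + n;
               what = complex_of_real (1 / sqrt P) \<cdot>\<^sub>v (pseudo_inverse Phi *\<^sub>v y)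
           in distortion L w what \<le> \<epsilon>)}"
  have Eeq: "E = {\<omega> \<in> space M. (1 / (real L * P)) * T \<omega> \<le> \<epsilon>}"
    unfolding E_def T_def Let_def distortion_eq[OF Phic orth Ppos] ..
  have Em: "E \<in> sets M" unfolding Eeq using Tm by measurable
  have sub: "space M - B \<subseteq> E"
  proof
    fix \<omega> assume "\<omega> \<in> space M - B"
    then have \<omega>: "\<omega> \<in> space M" and lt: "T \<omega> < (1 + \<eta>) * real L * N0" unfolding B_def by auto
    have "T \<omega> \<le> \<epsilon> * P * real L"
    proof -
      have "(1 + \<eta>) * real L * N0 = ((1 + \<eta>) * N0) * real L" by (simp only: ac_simps)
      also have "\<dots> \<le> (\<epsilon> * P) * real L" by (rule mult_right_mono[OF epsP]) simp
      finally show ?thesis using lt by simp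
    qed
    then have "(1 / (real L * P)) * T \<omega> \<le> \<epsilon>"
      using Ppos Lpos by (simp add: field_simps)
    then show "\<omega> \<in> E" unfolding Eeq using \<omega> by simp
  qed
  have "1 - \<delta> \<le> measure M (space M - B)"
    using mB finite_measure_compl[OF Bm] prob_space by simp
  also have "\<dots> \<le> measure M E" by (rule finite_measure_mono[OF sub Em])
  finally have part2: "1 - \<delta> \<le> measure M E" .
  show ?thesis using part1[unfolded R_def m_def] part2[unfolded E_def] by (rule conjI)
qed

end
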